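(* Let $S=\bigcup_{e\in E(S)}G_e$ be a Clifford semigroup such that $E(S)$ is uniformly locally finite. Then $T=\begin{pmatrix}\ell^{1}(S)^{**}&\ell^{1}(S)^{**}\\0&\ell^{1}(S)^{**}\end{pmatrix}$ is not approximately biprojective.
   Context: A Clifford semigroup is an inverse semigroup in which $ss^*=s^*s$ for every $s$; $G_e=\{s: ss^*=s^*s=e\}$ is the maximal subgroup at the idempotent $e$. $E(S)$ is the set of idempotents, ordered by $e\le f\iff e=ef=fe$, uniformly locally finite meaning $\sup_x|\{y: y\le x\}|<\infty$. $\ell^1(S)^{**}$ carries the first Arens product. For a Banach algebra $A$, $T=\begin{pmatrix}A&A\\0&A\end{pmatrix}$ is the algebra of upper triangular matrices with entries in $A$, matrix operations and norm $\|a\|+\|x\|+\|b\|$. A Banach algebra $B$ is approximately biprojective if there is a net $(\rho_\alpha)$ of continuous $B$-bimodule morphisms $B\to B\otimes_pB$ with $\pi_B\circ\rho_\alpha(b)\to b$ for all $b$, where $\pi_B(b\otimes c)=bc$. *)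

theory Defs
  imports Complex_Main
begin

definition inverse_semigroup :: "('s \<Rightarrow> 's \<Rightarrow> 's) \<Rightarrow> bool" where
  "inverse_semigroup mult \<longleftrightarrow>
     (\<forall>a b c. mult (mult a b) c = mult a (mult b c)) \<and>
     (\<forall>s. \<exists>!t. mult (mult s t) s = s \<and> mult (mult t s) t = t)"

definition sg_star :: "('s \<Rightarrow> 's \<Rightarrow> 's) \<Rightarrow> 's \<Rightarrow> 's" where
  "sg_star mult s = (THE t. mult (mult s t) s = s \<and> mult (mult t s) t = t)"

definition clifford_semigroup :: "('s \<Rightarrow> 's \<Rightarrow> 's) \<Rightarrow> bool" where
  "clifford_semigroup mult \<longleftrightarrow> inverse_semigroup mult \<and>
     (\<forall>s. mult s (sg_star mult s) = mult (sg_star mult s) s)"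

definition idempotents :: "('s \<Rightarrow> 's \<Rightarrow> 's) \<Rightarrow> 's set" where
  "idempotents mult = {e. mult e e = e}"

definition idem_le :: "('s \<Rightarrow> 's \<Rightarrow> 's) \<Rightarrow> 's \<Rightarrow> 's \<Rightarrow> bool" where
  "idem_le mult e f \<longleftrightarrow> e = mult e f \<and> e = mult f e"

definition uniformly_locally_finite :: "('s \<Rightarrow> 's \<Rightarrow> 's) \<Rightarrow> bool" where
  "uniformly_locally_finite mult \<longleftrightarrow>
     (\<exists>N::nat. \<forall>x\<in>idempotents mult.
        finite {y\<in>idempotents mult. idem_le mult y x} \<and>
        card {y\<in>idempotents mult. idem_le mult y x} \<le> N)"

section \<open>The bidual of l1(S) = dual of l-infinity(S), with the first Arens product\<close>

definition linf :: "('s \<Rightarrow> complex) set" where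
  "linf = {f. \<exists>K. \<forall>s. cmod (f s) \<le> K}"

definition linf_norm :: "('s \<Rightarrow> complex) \<Rightarrow> real" where
  "linf_norm f = (SUP s. cmod (f s))"

type_synonym 's bid = "('s \<Rightarrow> complex) \<Rightarrow> complex"

definition bidual :: "'s bid set" where
  "bidual = {m. (\<forall>f\<in>linf. \<forall>g\<in>linf. m (\<lambda>s. f s + g s) = m f + m g) \<and>
               (\<forall>c. \<forall>f\<in>linf. m (\<lambda>s. c * f s) = c * m f) \<and>
               (\<exists>K. \<forall>f\<in>linf. cmod (m f) \<le> K * linf_norm f) \<and>
               (\<forall>f. f \<notin> linf \<longrightarrow> m f = 0)}"

definition bid_norm :: "'s bid \<Rightarrow> real" where
  "bid_norm m = Sup {cmod (m f) | f. f \<in> linf \<and> linf_norm f \<le> 1}"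

definition bid_add :: "'s bid \<Rightarrow> 's bid \<Rightarrow> 's bid" where
  "bid_add m n = (\<lambda>f. m f + n f)"

definition bid_scale :: "complex \<Rightarrow> 's bid \<Rightarrow> 's bid" where
  "bid_scale c m = (\<lambda>f. c * m f)"

definition arens :: "('s \<Rightarrow> 's \<Rightarrow> 's) \<Rightarrow> 's bid \<Rightarrow> 's bid \<Rightarrow> 's bid" where
  "arens mult m n = (\<lambda>f. if f \<in> linf then m (\<lambda>s. n (\<lambda>t. f (mult s t))) else 0)"

section \<open>Upper triangular matrix algebra T over l1(S)**; (a,x,b) stands for [[a,x],[0,b]]\<close>

type_synonym 's tri = "'s bid \<times> 's bid \<times> 's bid"

definition T_carrier :: "'s tri set" where
  "T_carrier = bidual \<times> bidual \<times> bidual"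

definition T_zero :: "'s tri" where
  "T_zero = ((\<lambda>f. 0), (\<lambda>f. 0), (\<lambda>f. 0))"

definition T_add :: "'s tri \<Rightarrow> 's tri \<Rightarrow> 's tri" where
  "T_add u v = (bid_add (fst u) (fst v), bid_add (fst (snd u)) (fst (snd v)),
                bid_add (snd (snd u)) (snd (snd v)))"

definition T_scale :: "complex \<Rightarrow> 's tri \<Rightarrow> 's tri" where
  "T_scale c u = (bid_scale c (fst u), bid_scale c (fst (snd u)), bid_scale c (snd (snd u)))"

definition T_mult :: "('s \<Rightarrow> 's \<Rightarrow> 's) \<Rightarrow> 's tri \<Rightarrow> 's tri \<Rightarrow> 's tri" where
  "T_mult mult u v =
     (arens mult (fst u) (fst v),
      bid_add (arens mult (fst u) (fst (snd v))) (arens mult (fst (snd u)) (snd (snd v))),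
      arens mult (snd (snd u)) (snd (snd v)))"

definition T_norm :: "'s tri \<Rightarrow> real" where
  "T_norm u = bid_norm (fst u) + bid_norm (fst (snd u)) + bid_norm (snd (snd u))"

text \<open>B \<otimes>_p B is modelled by its isometric image in the dual of the space of bounded
  bilinear forms on B (its own dual): the norm closure of the span of elementary tensors.\<close>

definition bil :: "'a set \<Rightarrow> ('a \<Rightarrow> 'a \<Rightarrow> 'a) \<Rightarrow> (complex \<Rightarrow> 'a \<Rightarrow> 'a) \<Rightarrow> ('a \<Rightarrow> real)
                   \<Rightarrow> ('a \<Rightarrow> 'a \<Rightarrow> complex) \<Rightarrow> bool" where
  "bil C p sc nm \<beta> \<longleftrightarrow>
     (\<forall>x\<in>C. \<forall>y\<in>C. \<forall>w\<in>C. \<beta> (p x y) w = \<beta> x w + \<beta> y w \<and> \<beta> w (p x y) = \<beta> w x + \<beta> w y) \<and>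
     (\<forall>c. \<forall>x\<in>C. \<forall>y\<in>C. \<beta> (sc c x) y = c * \<beta> x y \<and> \<beta> x (sc c y) = c * \<beta> x y) \<and>
     (\<exists>K. \<forall>x\<in>C. \<forall>y\<in>C. cmod (\<beta> x y) \<le> K * nm x * nm y) \<and>
     (\<forall>x y. x \<notin> C \<or> y \<notin> C \<longrightarrow> \<beta> x y = 0)"

definition bil_norm :: "'a set \<Rightarrow> ('a \<Rightarrow> real) \<Rightarrow> ('a \<Rightarrow> 'a \<Rightarrow> complex) \<Rightarrow> real" where
  "bil_norm C nm \<beta> = Sup {cmod (\<beta> x y) | x y. x \<in> C \<and> y \<in> C \<and> nm x \<le> 1 \<and> nm y \<le> 1}"

type_synonym 'a tens = "('a \<Rightarrow> 'a \<Rightarrow> complex) \<Rightarrow> complex"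

text \<open>Value of the algebraic tensor sum_i x_i \<otimes> y_i at a bilinear form.\<close>
definition tsum :: "('a \<times> 'a) list \<Rightarrow> 'a tens" where
  "tsum L = (\<lambda>\<beta>. sum_list (map (\<lambda>(x, y). \<beta> x y) L))"

definition tclose :: "'a set \<Rightarrow> ('a \<Rightarrow> 'a \<Rightarrow> 'a) \<Rightarrow> (complex \<Rightarrow> 'a \<Rightarrow> 'a) \<Rightarrow> ('a \<Rightarrow> real)
                      \<Rightarrow> 'a tens \<Rightarrow> ('a \<times> 'a) list \<Rightarrow> real \<Rightarrow> bool" where
  "tclose C p sc nm u L eps \<longleftrightarrow>
     (\<forall>\<beta>. bil C p sc nm \<beta> \<and> bil_norm C nm \<beta> \<le> 1 \<longrightarrow> cmod (u \<beta> - tsum L \<beta>) \<le> eps)"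

definition proj_tensor :: "'a set \<Rightarrow> ('a \<Rightarrow> 'a \<Rightarrow> 'a) \<Rightarrow> (complex \<Rightarrow> 'a \<Rightarrow> 'a) \<Rightarrow> ('a \<Rightarrow> real)
                           \<Rightarrow> 'a tens set" where
  "proj_tensor C p sc nm =
     {u. (\<forall>\<beta>. \<not> bil C p sc nm \<beta> \<longrightarrow> u \<beta> = 0) \<and>
         (\<forall>eps>0. \<exists>L. set L \<subseteq> C \<times> C \<and> tclose C p sc nm u L eps)}"

text \<open>Multiplication map pi_B, defined on elementary tensors and extended by continuity.\<close>
definition lsum :: "'a \<Rightarrow> ('a \<Rightarrow> 'a \<Rightarrow> 'a) \<Rightarrow> ('a \<Rightarrow> 'a \<Rightarrow> 'a) \<Rightarrow> ('a \<times> 'a) list \<Rightarrow> 'a" where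
  "lsum z p m L = foldr (\<lambda>(x, y) acc. p (m x y) acc) L z"

definition pi_rel :: "'a set \<Rightarrow> 'a \<Rightarrow> ('a \<Rightarrow> 'a \<Rightarrow> 'a) \<Rightarrow> (complex \<Rightarrow> 'a \<Rightarrow> 'a)
                      \<Rightarrow> ('a \<Rightarrow> 'a \<Rightarrow> 'a) \<Rightarrow> ('a \<Rightarrow> real) \<Rightarrow> 'a tens \<Rightarrow> 'a \<Rightarrow> bool" where
  "pi_rel C z p sc m nm u x \<longleftrightarrow> x \<in> C \<and>
     (\<forall>eps>0. \<exists>L. set L \<subseteq> C \<times> C \<and> tclose C p sc nm u L eps \<and>
                  nm (p x (sc (-1) (lsum z p m L))) \<le> eps)"

definition pi_B :: "'a set \<Rightarrow> 'a \<Rightarrow> ('a \<Rightarrow> 'a \<Rightarrow> 'a) \<Rightarrow> (complex \<Rightarrow> 'a \<Rightarrow> 'a)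
                    \<Rightarrow> ('a \<Rightarrow> 'a \<Rightarrow> 'a) \<Rightarrow> ('a \<Rightarrow> real) \<Rightarrow> 'a tens \<Rightarrow> 'a" where
  "pi_B C z p sc m nm u = (THE x. pi_rel C z p sc m nm u x)"

text \<open>Bimodule actions: a.(x \<otimes> y) = (a x) \<otimes> y and (x \<otimes> y).a = x \<otimes> (y a).\<close>
definition lmod :: "'a set \<Rightarrow> ('a \<Rightarrow> 'a \<Rightarrow> 'a) \<Rightarrow> (complex \<Rightarrow> 'a \<Rightarrow> 'a) \<Rightarrow> ('a \<Rightarrow> 'a \<Rightarrow> 'a)
                    \<Rightarrow> ('a \<Rightarrow> real) \<Rightarrow> 'a \<Rightarrow> 'a tens \<Rightarrow> 'a tens" where
  "lmod C p sc m nm a u = (\<lambda>\<beta>. if bil C p sc nm \<beta>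
       then u (\<lambda>x y. if x \<in> C \<and> y \<in> C then \<beta> (m a x) y else 0) else 0)"

definition rmod :: "'a set \<Rightarrow> ('a \<Rightarrow> 'a \<Rightarrow> 'a) \<Rightarrow> (complex \<Rightarrow> 'a \<Rightarrow> 'a) \<Rightarrow> ('a \<Rightarrow> 'a \<Rightarrow> 'a)
                    \<Rightarrow> ('a \<Rightarrow> real) \<Rightarrow> 'a tens \<Rightarrow> 'a \<Rightarrow> 'a tens" where
  "rmod C p sc m nm u a = (\<lambda>\<beta>. if bil C p sc nm \<beta>
       then u (\<lambda>x y. if x \<in> C \<and> y \<in> C then \<beta> x (m y a) else 0) else 0)"

definition bimod_morph :: "'a set \<Rightarrow> ('a \<Rightarrow> 'a \<Rightarrow> 'a) \<Rightarrow> (complex \<Rightarrow> 'a \<Rightarrow> 'a) \<Rightarrow> ('a \<Rightarrow> 'a \<Rightarrow> 'a)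
                    \<Rightarrow> ('a \<Rightarrow> real) \<Rightarrow> ('a \<Rightarrow> 'a tens) \<Rightarrow> bool" where
  "bimod_morph C p sc m nm \<rho> \<longleftrightarrow>
     (\<forall>b\<in>C. \<rho> b \<in> proj_tensor C p sc nm) \<and>
     (\<forall>a\<in>C. \<forall>b\<in>C. \<rho> (p a b) = (\<lambda>\<beta>. \<rho> a \<beta> + \<rho> b \<beta>)) \<and>
     (\<forall>c. \<forall>a\<in>C. \<rho> (sc c a) = (\<lambda>\<beta>. c * \<rho> a \<beta>)) \<and>
     (\<exists>K. \<forall>b\<in>C. \<forall>\<beta>. bil C p sc nm \<beta> \<and> bil_norm C nm \<beta> \<le> 1 \<longrightarrow> cmod (\<rho> b \<beta>) \<le> K * nm b) \<and>
     (\<forall>a\<in>C. \<forall>b\<in>C. \<rho> (m a b) = lmod C p sc m nm a (\<rho> b) \<and>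
                   \<rho> (m b a) = rmod C p sc m nm (\<rho> b) a)"

text \<open>Approximate biprojectivity, with nets indexed by a directed set I of (arbitrary) type 'i.\<close>
definition approx_biprojective :: "'i itself \<Rightarrow> 'a set \<Rightarrow> 'a \<Rightarrow> ('a \<Rightarrow> 'a \<Rightarrow> 'a)
      \<Rightarrow> (complex \<Rightarrow> 'a \<Rightarrow> 'a) \<Rightarrow> ('a \<Rightarrow> 'a \<Rightarrow> 'a) \<Rightarrow> ('a \<Rightarrow> real) \<Rightarrow> bool" where
  "approx_biprojective (_ :: 'i itself) C z p sc m nm \<longleftrightarrow>
     (\<exists>(I :: 'i set) le (\<rho> :: 'i \<Rightarrow> 'a \<Rightarrow> 'a tens).
        I \<noteq> {} \<and> (\<forall>i\<in>I. le i i) \<and>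
        (\<forall>i\<in>I. \<forall>j\<in>I. \<forall>k\<in>I. le i j \<and> le j k \<longrightarrow> le i k) \<and>
        (\<forall>i\<in>I. \<forall>j\<in>I. \<exists>k\<in>I. le i k \<and> le j k) \<and>
        (\<forall>i\<in>I. bimod_morph C p sc m nm (\<rho> i)) \<and>
        (\<forall>b\<in>C. \<forall>eps>0. \<exists>i0\<in>I. \<forall>i\<in>I. le i0 i \<longrightarrow>
            nm (p (pi_B C z p sc m nm (\<rho> i b)) (sc (-1) b)) < eps))"

end

theory Submission
  imports Defs
begin


lemma linf_bdd: "f \<in> linf \<Longrightarrow> bdd_above (range (\<lambda>s. cmod (f s)))"
  unfolding linf_def bdd_above_def by auto

lemma linf_le: "f \<in> linf \<Longrightarrow> cmod (f s) \<le> linf_norm f"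
  unfolding linf_norm_def by (rule cSUP_upper) (auto simp: linf_bdd)

lemma linf_least: "(\<And>s. cmod (f s) \<le> B) \<Longrightarrow> linf_norm f \<le> B"
  unfolding linf_norm_def by (rule cSUP_least) auto

lemma linf_nonneg: "f \<in> linf \<Longrightarrow> 0 \<le> linf_norm f"
  using linf_le[of f undefined] norm_ge_zero order_trans by blast

lemma linf_const: "(\<lambda>s. c) \<in> linf"
  unfolding linf_def by auto

lemma linf_add: "f \<in> linf \<Longrightarrow> g \<in> linf \<Longrightarrow> (\<lambda>s. f s + g s) \<in> linf"
proof -
  assume "f \<in> linf" "g \<in> linf"
  then obtain K L where K: "\<And>s. cmod (f s) \<le> K" and L: "\<And>s. cmod (g s) \<le> L" unfolding linf_def by auto
  have "cmod (f s + g s) \<le> K + L" for s using norm_triangle_ineq[of "f s" "g s"] K[of s] L[of s] by linarith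
  then show ?thesis unfolding linf_def by auto
qed

lemma linf_scale: "f \<in> linf \<Longrightarrow> (\<lambda>s. c * f s) \<in> linf"
proof -
  assume "f \<in> linf" then obtain K where K: "\<And>s. cmod (f s) \<le> K" unfolding linf_def by auto
  have "cmod (c * f s) \<le> cmod c * K" for s by (simp add: norm_mult K mult_left_mono)
  then show ?thesis unfolding linf_def by auto
qed

lemma linf_shift: "f \<in> linf \<Longrightarrow> (\<lambda>t. f (mult s t)) \<in> linf"
  unfolding linf_def by auto

lemma linf_shift_norm: "f \<in> linf \<Longrightarrow> linf_norm (\<lambda>t. f (mult s t)) \<le> linf_norm f"
  by (rule linf_least) (simp add: linf_le)

lemma linf_norm_zero: "f \<in> linf \<Longrightarrow> linf_norm f \<le> 0 \<Longrightarrow> f = (\<lambda>s. 0)"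
proof
  fix s assume "f \<in> linf" "linf_norm f \<le> 0"
  then have "cmod (f s) \<le> 0" using linf_le[of f s] by linarith
  then show "f s = 0" by simp
qed

lemma linf_norm_const1: "linf_norm (\<lambda>s. 1) \<le> 1"
  by (rule linf_least) simp

lemma linf_norm_zero_le: "linf_norm (\<lambda>s. 0) \<le> 1"
  by (rule linf_least) simp

lemma bidD:
  assumes "m \<in> bidual"
  shows "\<And>f g. f \<in> linf \<Longrightarrow> g \<in> linf \<Longrightarrow> m (\<lambda>s. f s + g s) = m f + m g"
    and "\<And>c f. f \<in> linf \<Longrightarrow> m (\<lambda>s. c * f s) = c * m f"
    and "\<exists>K. \<forall>f\<in>linf. cmod (m f) \<le> K * linf_norm f"
    and "\<And>f. f \<notin> linf \<Longrightarrow> m f = 0"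
  using assms unfolding bidual_def by auto

lemma bid_zero_app: "m \<in> bidual \<Longrightarrow> m (\<lambda>s. 0) = 0"
  using bidD(2)[OF _ linf_const[of 0], of m 0] by simp

lemma bid_bdd: assumes "m \<in> bidual"
  shows "bdd_above {cmod (m f) | f. f \<in> linf \<and> linf_norm f \<le> 1}"
proof -
  obtain K where K: "\<forall>f\<in>linf. cmod (m f) \<le> K * linf_norm f" using bidD(3)[OF assms] by auto
  have "cmod (m f) \<le> \<bar>K\<bar>" if "f \<in> linf" "linf_norm f \<le> 1" for f
  proof -
    have "K * linf_norm f \<le> \<bar>K\<bar> * linf_norm f" using linf_nonneg[OF that(1)]
      by (simp add: mult_right_mono)
    also have "\<dots> \<le> \<bar>K\<bar>" using that(2) by (simp add: mult_left_le)
    finally show ?thesis using K that(1) by force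
  qed
  then show ?thesis unfolding bdd_above_def by blast
qed

lemma bid_ge: "m \<in> bidual \<Longrightarrow> f \<in> linf \<Longrightarrow> linf_norm f \<le> 1 \<Longrightarrow> cmod (m f) \<le> bid_norm m"
  unfolding bid_norm_def by (rule cSup_upper) (auto simp: bid_bdd)

lemma bid_least: "(\<And>f. f \<in> linf \<Longrightarrow> linf_norm f \<le> 1 \<Longrightarrow> cmod (m f) \<le> B) \<Longrightarrow> bid_norm m \<le> B"
  unfolding bid_norm_def
  by (rule cSup_least) (use linf_const[of 0] linf_norm_zero_le in auto)

lemma bid_nonneg: "m \<in> bidual \<Longrightarrow> 0 \<le> bid_norm m"
  using bid_ge[of m "\<lambda>s. 0"] linf_const[of 0] linf_norm_zero_le norm_ge_zero order_trans by blast

lemma bid_bound: assumes m: "m \<in> bidual" and f: "f \<in> linf"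
  shows "cmod (m f) \<le> bid_norm m * linf_norm f"
proof (cases "linf_norm f \<le> 0")
  case True
  then have "f = (\<lambda>s. 0)" using linf_norm_zero f by blast
  then show ?thesis using bid_zero_app[OF m] bid_nonneg[OF m] linf_nonneg[OF f] by simp
next
  case False
  define r where "r = linf_norm f"
  have r: "r > 0" using False r_def by simp
  define g where "g = (\<lambda>s. of_real (1/r) * f s)"
  have g: "g \<in> linf" unfolding g_def using linf_scale[OF f] .
  have "linf_norm g \<le> 1"
  proof (rule linf_least)
    fix s have "cmod (g s) = cmod (f s) / r" using r by (simp add: g_def norm_mult norm_divide)
    also have "\<dots> \<le> 1" using linf_le[OF f, of s] r r_def by simp
    finally show "cmod (g s) \<le> 1" .
  qed
  then have "cmod (m g) \<le> bid_norm m" using bid_ge[OF m g] by simp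
  moreover have "m g = of_real (1/r) * m f" unfolding g_def using bidD(2)[OF m f, of "of_real (1/r)"] by simp
  ultimately have "cmod (m f) / r \<le> bid_norm m" using r by (simp add: norm_mult norm_divide)
  then show ?thesis using r r_def by (simp add: field_simps)
qed



lemma zero_bid: "(\<lambda>f. 0) \<in> bidual"
  unfolding bidual_def by (auto intro: exI[of _ 0])

lemma bid_add_in: assumes m: "m \<in> bidual" and n: "n \<in> bidual" shows "bid_add m n \<in> bidual"
proof -
  have "cmod (m f + n f) \<le> (bid_norm m + bid_norm n) * linf_norm f" if "f \<in> linf" for f
    using norm_triangle_ineq[of "m f" "n f"] bid_bound[OF m that] bid_bound[OF n that]
    by (simp add: distrib_right)
  then show ?thesis using m n unfolding bid_add_def
    by (subst bidual_def) (auto simp: bidD distrib_left)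
qed

lemma bid_scale_in: assumes m: "m \<in> bidual" shows "bid_scale c m \<in> bidual"
proof -
  have "cmod (c * m f) \<le> (cmod c * bid_norm m) * linf_norm f" if "f \<in> linf" for f
    using bid_bound[OF m that] by (simp add: norm_mult mult.assoc mult_left_mono)
  then show ?thesis using m unfolding bid_scale_def
    by (subst bidual_def) (auto simp: bidD distrib_left mult.left_commute)
qed

lemma G_linf:
  assumes n: "n \<in> bidual" and f: "f \<in> linf"
  shows "(\<lambda>s. n (\<lambda>t. f (mult s t))) \<in> linf"
    and "linf_norm (\<lambda>s. n (\<lambda>t. f (mult s t))) \<le> bid_norm n * linf_norm f"
proof -
  have b: "cmod (n (\<lambda>t. f (mult s t))) \<le> bid_norm n * linf_norm f" for s
  proof -
    have "cmod (n (\<lambda>t. f (mult s t))) \<le> bid_norm n * linf_norm (\<lambda>t. f (mult s t))"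
      using bid_bound[OF n linf_shift[OF f]] .
    also have "\<dots> \<le> bid_norm n * linf_norm f"
      using mult_left_mono[OF linf_shift_norm[OF f, of mult s] bid_nonneg[OF n]] .
    finally show ?thesis .
  qed
  then show "(\<lambda>s. n (\<lambda>t. f (mult s t))) \<in> linf" unfolding linf_def by auto
  show "linf_norm (\<lambda>s. n (\<lambda>t. f (mult s t))) \<le> bid_norm n * linf_norm f"
    by (rule linf_least) (rule b)
qed

lemma arens_bound:
  assumes m: "m \<in> bidual" and n: "n \<in> bidual" and f: "f \<in> linf"
  shows "cmod (arens mult m n f) \<le> bid_norm m * bid_norm n * linf_norm f"
proof -
  have "cmod (arens mult m n f) = cmod (m (\<lambda>s. n (\<lambda>t. f (mult s t))))"
    using f by (simp add: arens_def)
  also have "\<dots> \<le> bid_norm m * linf_norm (\<lambda>s. n (\<lambda>t. f (mult s t)))"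
    using bid_bound[OF m G_linf(1)[OF n f, where mult=mult]] .
  also have "\<dots> \<le> bid_norm m * (bid_norm n * linf_norm f)"
    using mult_left_mono[OF G_linf(2)[OF n f, where mult=mult] bid_nonneg[OF m]] .
  finally show ?thesis by (simp add: mult.assoc)
qed

lemma G_add: assumes n: "n \<in> bidual" and f: "f \<in> linf" and g: "g \<in> linf"
  shows "(\<lambda>s. n (\<lambda>t. f (mult s t) + g (mult s t))) =
         (\<lambda>s. n (\<lambda>t. f (mult s t)) + n (\<lambda>t. g (mult s t)))"
proof (rule ext)
  fix s show "n (\<lambda>t. f (mult s t) + g (mult s t)) = n (\<lambda>t. f (mult s t)) + n (\<lambda>t. g (mult s t))"
    using bidD(1)[OF n linf_shift[OF f, of mult s] linf_shift[OF g, of mult s]] by simp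
qed

lemma G_scale: assumes n: "n \<in> bidual" and f: "f \<in> linf"
  shows "(\<lambda>s. n (\<lambda>t. c * f (mult s t))) = (\<lambda>s. c * n (\<lambda>t. f (mult s t)))"
proof (rule ext)
  fix s show "n (\<lambda>t. c * f (mult s t)) = c * n (\<lambda>t. f (mult s t))"
    using bidD(2)[OF n linf_shift[OF f, of mult s]] by simp
qed

lemma arens_in: assumes m: "m \<in> bidual" and n: "n \<in> bidual"
  shows "arens mult m n \<in> bidual"
proof -
  have 1: "arens mult m n (\<lambda>s. f s + g s) = arens mult m n f + arens mult m n g"
    if f: "f \<in> linf" and g: "g \<in> linf" for f g
    using linf_add[OF f g] f g G_add[OF n f g, where mult=mult]
      bidD(1)[OF m G_linf(1)[OF n f] G_linf(1)[OF n g, where mult=mult]]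
    by (simp add: arens_def)
  have 2: "arens mult m n (\<lambda>s. c * f s) = c * arens mult m n f" if f: "f \<in> linf" for c f
    using linf_scale[OF f] f G_scale[OF n f, where mult=mult and c=c] bidD(2)[OF m G_linf(1)[OF n f, where mult=mult]]
    by (simp add: arens_def)
  have 3: "\<forall>f\<in>linf. cmod (arens mult m n f) \<le> (bid_norm m * bid_norm n) * linf_norm f"
    using arens_bound[OF m n] by auto
  show ?thesis unfolding bidual_def using 1 2 3 by (auto simp: arens_def)
qed

lemma arens_add_left: "arens mult (bid_add m m') n f = arens mult m n f + arens mult m' n f"
  by (simp add: arens_def bid_add_def)

lemma arens_scale_left: "arens mult (bid_scale c m) n f = c * arens mult m n f"
  by (simp add: arens_def bid_scale_def)

lemma arens_add_right: assumes m: "m \<in> bidual" and n: "n \<in> bidual" and n': "n' \<in> bidual"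
  shows "arens mult m (bid_add n n') f = arens mult m n f + arens mult m n' f"
proof (cases "f \<in> linf")
  case True
  have "(\<lambda>s. bid_add n n' (\<lambda>t. f (mult s t))) = (\<lambda>s. n (\<lambda>t. f (mult s t)) + n' (\<lambda>t. f (mult s t)))"
    by (simp add: bid_add_def)
  then show ?thesis using True bidD(1)[OF m G_linf(1)[OF n True, where mult=mult] G_linf(1)[OF n' True, where mult=mult]]
    by (simp add: arens_def)
qed (simp add: arens_def)

lemma arens_scale_right: assumes m: "m \<in> bidual" and n: "n \<in> bidual"
  shows "arens mult m (bid_scale c n) f = c * arens mult m n f"
proof (cases "f \<in> linf")
  case True
  have "(\<lambda>s. bid_scale c n (\<lambda>t. f (mult s t))) = (\<lambda>s. c * n (\<lambda>t. f (mult s t)))"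
    by (simp add: bid_scale_def)
  then show ?thesis using True bidD(2)[OF m G_linf(1)[OF n True, where mult=mult]]
    by (simp add: arens_def)
qed (simp add: arens_def)

lemma arens_zero_left: "arens mult (\<lambda>f. 0) n = (\<lambda>f. 0)"
  by (simp add: arens_def fun_eq_iff)

lemma arens_zero_right: "m \<in> bidual \<Longrightarrow> arens mult m (\<lambda>f. 0) = (\<lambda>f. 0)"
  by (simp add: arens_def fun_eq_iff bid_zero_app)



definition crd :: "nat \<Rightarrow> 's tri \<Rightarrow> 's bid" where
  "crd k u = (if k = 0 then fst u else if k = 1 then fst (snd u) else snd (snd u))"

lemma T_in: "u \<in> T_carrier \<longleftrightarrow> fst u \<in> bidual \<and> fst (snd u) \<in> bidual \<and> snd (snd u) \<in> bidual"
  by (cases u) (auto simp: T_carrier_def)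

lemma crd_in: "u \<in> T_carrier \<Longrightarrow> crd k u \<in> bidual"
  by (auto simp: crd_def T_in)

lemma crd_add: "crd k (T_add u v) = bid_add (crd k u) (crd k v)"
  by (simp add: crd_def T_add_def)

lemma crd_scale: "crd k (T_scale c u) = bid_scale c (crd k u)"
  by (simp add: crd_def T_scale_def)

lemma crd_zero: "crd k T_zero = (\<lambda>f. 0)"
  by (simp add: crd_def T_zero_def)

lemma T_zero_in: "T_zero \<in> T_carrier"
  by (simp add: T_in T_zero_def zero_bid)

lemma T_add_in: "u \<in> T_carrier \<Longrightarrow> v \<in> T_carrier \<Longrightarrow> T_add u v \<in> T_carrier"
  by (simp add: T_in T_add_def bid_add_in)

lemma T_scale_in: "u \<in> T_carrier \<Longrightarrow> T_scale c u \<in> T_carrier"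
  by (simp add: T_in T_scale_def bid_scale_in)

lemma T_mult_in: "u \<in> T_carrier \<Longrightarrow> v \<in> T_carrier \<Longrightarrow> T_mult mult u v \<in> T_carrier"
  by (simp add: T_in T_mult_def bid_add_in arens_in)

lemma T_norm_ge: "u \<in> T_carrier \<Longrightarrow> bid_norm (crd k u) \<le> T_norm u"
  using bid_nonneg[of "fst u"] bid_nonneg[of "fst (snd u)"] bid_nonneg[of "snd (snd u)"]
  by (auto simp: crd_def T_norm_def T_in)

lemma T_norm_nonneg: "u \<in> T_carrier \<Longrightarrow> 0 \<le> T_norm u"
  using bid_nonneg[of "fst u"] bid_nonneg[of "fst (snd u)"] bid_nonneg[of "snd (snd u)"]
  by (auto simp: T_norm_def T_in)

lemma arens_add_left_fun: "arens mult (bid_add m m') n = bid_add (arens mult m n) (arens mult m' n)"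
  by (rule ext) (subst arens_add_left, simp add: bid_add_def)

lemma arens_add_right_fun: "m \<in> bidual \<Longrightarrow> n \<in> bidual \<Longrightarrow> n' \<in> bidual \<Longrightarrow>
  arens mult m (bid_add n n') = bid_add (arens mult m n) (arens mult m n')"
  by (rule ext) (subst arens_add_right, simp_all add: bid_add_def)

lemma crd_mult_add_left:
  assumes "a \<in> T_carrier" "a' \<in> T_carrier" "b \<in> T_carrier"
  shows "crd k (T_mult mult (T_add a a') b) f = crd k (T_mult mult a b) f + crd k (T_mult mult a' b) f"
  using assms by (simp add: crd_def T_mult_def T_add_def arens_add_left_fun T_in) (simp add: bid_add_def add_ac)

lemma crd_mult_add_right:
  assumes "a \<in> T_carrier" "b \<in> T_carrier" "b' \<in> T_carrier"
  shows "crd k (T_mult mult a (T_add b b')) f = crd k (T_mult mult a b) f + crd k (T_mult mult a b') f"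
  using assms by (simp add: crd_def T_mult_def T_add_def arens_add_right_fun T_in) (simp add: bid_add_def add_ac)

lemma crd_mult_scale_left:
  assumes "a \<in> T_carrier" "b \<in> T_carrier"
  shows "crd k (T_mult mult (T_scale c a) b) f = c * crd k (T_mult mult a b) f"
  using assms by (simp add: crd_def T_mult_def T_scale_def arens_scale_left bid_add_def T_in distrib_left)

lemma crd_mult_scale_right:
  assumes "a \<in> T_carrier" "b \<in> T_carrier"
  shows "crd k (T_mult mult a (T_scale c b)) f = c * crd k (T_mult mult a b) f"
  using assms by (simp add: crd_def T_mult_def T_scale_def arens_scale_right bid_add_def T_in distrib_left)

lemma crd_mult_bound:
  assumes a: "a \<in> T_carrier" and b: "b \<in> T_carrier" and f: "f \<in> linf"
  shows "cmod (crd k (T_mult mult a b) f) \<le> T_norm a * T_norm b * linf_norm f"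
proof -
  obtain a1 a2 a3 where aa: "a = (a1, a2, a3)" by (cases a) auto
  obtain b1 b2 b3 where bb: "b = (b1, b2, b3)" by (cases b) auto
  have A: "a1 \<in> bidual" "a2 \<in> bidual" "a3 \<in> bidual" using a aa by (auto simp: T_in)
  have B: "b1 \<in> bidual" "b2 \<in> bidual" "b3 \<in> bidual" using b bb by (auto simp: T_in)
  define x1 where "x1 = bid_norm a1" define x2 where "x2 = bid_norm a2" define x3 where "x3 = bid_norm a3"
  define y1 where "y1 = bid_norm b1" define y2 where "y2 = bid_norm b2" define y3 where "y3 = bid_norm b3"
  have nn: "0 \<le> x1" "0 \<le> x2" "0 \<le> x3" "0 \<le> y1" "0 \<le> y2" "0 \<le> y3"
    using A B bid_nonneg unfolding x1_def x2_def x3_def y1_def y2_def y3_def by auto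
  have nf: "0 \<le> linf_norm f" using linf_nonneg[OF f] .
  have prod: "(x1 + x2 + x3) * (y1 + y2 + y3) = x1*y1 + x1*y2 + x1*y3 + x2*y1 + x2*y2 + x2*y3 + x3*y1 + x3*y2 + x3*y3"
    by (simp add: algebra_simps)
  have pn: "0 \<le> x1*y1" "0 \<le> x1*y2" "0 \<le> x1*y3" "0 \<le> x2*y1" "0 \<le> x2*y2" "0 \<le> x2*y3"
    "0 \<le> x3*y1" "0 \<le> x3*y2" "0 \<le> x3*y3" using nn by auto
  have Nab: "T_norm a * T_norm b = (x1 + x2 + x3) * (y1 + y2 + y3)"
    by (simp add: T_norm_def aa bb x1_def x2_def x3_def y1_def y2_def y3_def)
  consider "k = 0" | "k = 1" | "k \<noteq> 0 \<and> k \<noteq> 1" by auto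
  then show ?thesis
  proof cases
    case 1
    have "cmod (crd k (T_mult mult a b) f) \<le> x1 * y1 * linf_norm f"
      using 1 arens_bound[OF A(1) B(1) f] by (simp add: crd_def T_mult_def aa bb x1_def y1_def)
    also have "\<dots> \<le> T_norm a * T_norm b * linf_norm f"
      unfolding Nab prod using pn nf by (intro mult_right_mono) linarith+
    finally show ?thesis .
  next
    case 2
    have "cmod (crd k (T_mult mult a b) f) \<le> cmod (arens mult a1 b2 f) + cmod (arens mult a2 b3 f)"
      using 2 by (simp add: crd_def T_mult_def aa bb bid_add_def norm_triangle_ineq)
    also have "\<dots> \<le> x1 * y2 * linf_norm f + x2 * y3 * linf_norm f"
      using arens_bound[OF A(1) B(2) f, where mult=mult] arens_bound[OF A(2) B(3) f, where mult=mult]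
      unfolding x1_def y2_def x2_def y3_def by linarith
    also have "\<dots> = (x1 * y2 + x2 * y3) * linf_norm f" by (simp add: algebra_simps)
    also have "\<dots> \<le> T_norm a * T_norm b * linf_norm f"
      unfolding Nab prod using pn nf by (intro mult_right_mono) linarith+
    finally show ?thesis .
  next
    case 3
    have "cmod (crd k (T_mult mult a b) f) \<le> x3 * y3 * linf_norm f"
      using 3 arens_bound[OF A(3) B(3) f] by (simp add: crd_def T_mult_def aa bb x3_def y3_def)
    also have "\<dots> \<le> T_norm a * T_norm b * linf_norm f"
      unfolding Nab prod using pn nf by (intro mult_right_mono) linarith+
    finally show ?thesis .
  qed
qed

definition bf :: "('s \<Rightarrow> 's \<Rightarrow> 's) \<Rightarrow> nat \<Rightarrow> ('s \<Rightarrow> complex) \<Rightarrow> 's tri \<Rightarrow> 's tri \<Rightarrow> complex" where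
  "bf mult k f = (\<lambda>a b. if a \<in> T_carrier \<and> b \<in> T_carrier then crd k (T_mult mult a b) f else 0)"

lemma bf_bil: fixes f :: "'s \<Rightarrow> complex" assumes f: "f \<in> linf"
  shows "bil T_carrier T_add T_scale T_norm (bf mult k f)"
proof -
  have "cmod (bf mult k f x y) \<le> linf_norm f * T_norm x * T_norm y" if "x \<in> T_carrier" "y \<in> T_carrier" for x y
    using crd_mult_bound[OF that f, of k mult] that by (simp add: bf_def mult_ac)
  then have "\<exists>K. \<forall>x\<in>T_carrier. \<forall>y\<in>T_carrier. cmod (bf mult k f x y) \<le> K * T_norm x * T_norm y"
    by (intro exI[of _ "linf_norm f"]) auto
  then show ?thesis unfolding bil_def
    by (auto simp: bf_def T_add_in T_scale_in crd_mult_add_left crd_mult_add_right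
        crd_mult_scale_left crd_mult_scale_right)
qed

lemma T_norm_zero: "T_norm (T_zero :: 's tri) = 0"
proof -
  have "bid_norm (\<lambda>f::'s \<Rightarrow> complex. 0::complex) \<le> 0" by (rule bid_least) simp
  moreover have "0 \<le> bid_norm (\<lambda>f::'s \<Rightarrow> complex. 0::complex)" using bid_nonneg zero_bid by blast
  ultimately show ?thesis by (simp add: T_norm_def T_zero_def)
qed

lemma bil_norm_le:
  assumes "\<And>x y. x \<in> T_carrier \<Longrightarrow> y \<in> T_carrier \<Longrightarrow> T_norm x \<le> 1 \<Longrightarrow> T_norm y \<le> 1 \<Longrightarrow> cmod (\<beta> x y) \<le> B"
  shows "bil_norm T_carrier T_norm \<beta> \<le> B"
  unfolding bil_norm_def
proof (rule cSup_least)
  show "{cmod (\<beta> x y) |x y. x \<in> T_carrier \<and> y \<in> T_carrier \<and> T_norm x \<le> 1 \<and> T_norm y \<le> 1} \<noteq> {}"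
  proof -
    have "cmod (\<beta> T_zero T_zero) \<in> {cmod (\<beta> x y) |x y. x \<in> T_carrier \<and> y \<in> T_carrier \<and> T_norm x \<le> 1 \<and> T_norm y \<le> 1}"
      by (rule CollectI, rule exI[of _ T_zero], rule exI[of _ T_zero]) (simp add: T_zero_in T_norm_zero)
    then show ?thesis by (metis empty_iff)
  qed
qed (use assms in blast)

lemma bf_norm: fixes f :: "'s \<Rightarrow> complex" assumes f: "f \<in> linf" and f1: "linf_norm f \<le> 1"
  shows "bil_norm T_carrier T_norm (bf mult k f) \<le> 1"
proof (rule bil_norm_le)
  fix x y :: "'s tri" assume x: "x \<in> T_carrier" and y: "y \<in> T_carrier" and "T_norm x \<le> 1" "T_norm y \<le> 1"
  have "cmod (bf mult k f x y) \<le> T_norm x * T_norm y * linf_norm f"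
    using crd_mult_bound[OF x y f] x y by (simp add: bf_def)
  also have "\<dots> \<le> 1 * 1 * 1"
    using \<open>T_norm x \<le> 1\<close> \<open>T_norm y \<le> 1\<close> f1 T_norm_nonneg[OF x] T_norm_nonneg[OF y] linf_nonneg[OF f]
    by (intro mult_mono) auto
  finally show "cmod (bf mult k f x y) \<le> 1" by simp
qed

lemma lsum_in: "set L \<subseteq> T_carrier \<times> T_carrier \<Longrightarrow> lsum T_zero T_add (T_mult mult) L \<in> T_carrier"
  by (induction L) (auto simp: lsum_def T_zero_in T_add_in T_mult_in)

lemma lsum_eval: "set L \<subseteq> T_carrier \<times> T_carrier \<Longrightarrow>
   crd k (lsum T_zero T_add (T_mult mult) L) f = tsum L (bf mult k f)"
proof (induction L)
  case Nil then show ?case by (simp add: lsum_def tsum_def crd_zero)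
next
  case (Cons xy L)
  obtain x y where xy: "xy = (x, y)" by (cases xy) auto
  have "crd k (lsum T_zero T_add (T_mult mult) L) f = tsum L (bf mult k f)" using Cons by auto
  then show ?case using Cons.prems
    by (simp add: xy lsum_def tsum_def crd_add bid_add_def bf_def)
qed



lemma eq_eps:
  fixes a b :: complex
  assumes "\<And>e. e > 0 \<Longrightarrow> cmod (a - b) \<le> M * e"
  shows "a = b"
proof (rule ccontr)
  assume "a \<noteq> b"
  then have d: "cmod (a - b) > 0" by simp
  define e where "e = cmod (a - b) / (2 * (\<bar>M\<bar> + 1))"
  have e: "e > 0" using d by (simp add: e_def add_pos_nonneg)
  have "cmod (a - b) \<le> M * e" using assms e by blast
  also have "\<dots> \<le> (\<bar>M\<bar> + 1) * e" using e by (intro mult_right_mono) auto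
  also have "\<dots> = cmod (a - b) / 2" unfolding e_def by (simp add: field_simps add_pos_nonneg)
  finally show False using d by simp
qed

lemma tri3: fixes a b c :: complex shows "cmod (a - b - c) \<le> cmod a + cmod b + cmod c"
proof -
  have "cmod (a - b - c) \<le> cmod (a - b) + cmod c" by (rule norm_triangle_ineq4)
  also have "cmod (a - b) \<le> cmod a + cmod b" by (rule norm_triangle_ineq4)
  finally show ?thesis by simp
qed

lemma tri2m: fixes a c d :: complex shows "cmod (a - c * d) \<le> cmod a + cmod c * cmod d"
  using norm_triangle_ineq4[of a "c * d"] by (simp add: norm_mult)

lemma T_norm_crd: "T_norm v = bid_norm (crd 0 v) + bid_norm (crd 1 v) + bid_norm (crd 2 v)"
  by (simp add: T_norm_def crd_def)

lemma crd_diff: "crd k (T_add x (T_scale c y)) f = crd k x f + c * crd k y f"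
  by (simp add: crd_add crd_scale bid_add_def bid_scale_def)

lemma crd_eq_T: "(\<And>k. crd k x = crd k y) \<Longrightarrow> x = y"
proof -
  assume h: "\<And>k. crd k x = crd k y"
  have "fst x = fst y" using h[of 0] by (simp add: crd_def)
  moreover have "fst (snd x) = fst (snd y)" using h[of 1] by (simp add: crd_def)
  moreover have "snd (snd x) = snd (snd y)" using h[of 2] by (simp add: crd_def)
  ultimately show ?thesis by (simp add: prod_eq_iff)
qed

lemma crd_bound_T: "v \<in> T_carrier \<Longrightarrow> f \<in> linf \<Longrightarrow> cmod (crd k v f) \<le> T_norm v * linf_norm f"
  using bid_bound[OF crd_in[of v k]] T_norm_ge[of v k] linf_nonneg[of f]
  by (meson mult_right_mono order_trans)

lemma PT_approx:
  assumes "u \<in> proj_tensor T_carrier T_add T_scale T_norm" "eps > 0"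
  shows "\<exists>L. set L \<subseteq> T_carrier \<times> T_carrier \<and> tclose T_carrier T_add T_scale T_norm u L eps"
  using assms unfolding proj_tensor_def by auto

definition sc_val :: "('s \<Rightarrow> 's \<Rightarrow> 's) \<Rightarrow> 's tri tens \<Rightarrow> nat \<Rightarrow> real \<Rightarrow> ('s \<Rightarrow> complex) \<Rightarrow> complex" where
  "sc_val mult u k r f = of_real r * u (bf mult k (\<lambda>s. of_real (1/r) * f s))"

lemma KL:
  fixes f :: "'s \<Rightarrow> complex"
  assumes tc: "tclose T_carrier T_add T_scale T_norm u L eps" and L: "set L \<subseteq> T_carrier \<times> T_carrier"
    and f: "f \<in> linf" and r: "r > 0" "linf_norm f \<le> r"
  shows "cmod (sc_val mult u k r f - crd k (lsum T_zero T_add (T_mult mult) L) f) \<le> r * eps"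
proof -
  define g where "g = (\<lambda>s. of_real (1/r) * f s)"
  have g: "g \<in> linf" unfolding g_def by (rule linf_scale[OF f])
  have g1: "linf_norm g \<le> 1"
  proof (rule linf_least)
    fix s have "cmod (g s) = cmod (f s) / r" using r by (simp add: g_def norm_mult norm_divide)
    also have "\<dots> \<le> 1" using linf_le[OF f, of s] r by simp
    finally show "cmod (g s) \<le> 1" .
  qed
  have "cmod (u (bf mult k g) - tsum L (bf mult k g)) \<le> eps"
    using tc bf_bil[OF g] bf_norm[OF g g1] unfolding tclose_def by blast
  moreover have "tsum L (bf mult k g) = crd k (lsum T_zero T_add (T_mult mult) L) g"
    using lsum_eval[OF L] by simp
  moreover have fr: "f = (\<lambda>s. of_real r * g s)" using r by (simp add: g_def)
  have cr: "crd k (lsum T_zero T_add (T_mult mult) L) (\<lambda>s. of_real r * g s) = of_real r * crd k (lsum T_zero T_add (T_mult mult) L) g"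
    by (rule bidD(2)[OF crd_in[OF lsum_in[OF L]] g])
  moreover have "crd k (lsum T_zero T_add (T_mult mult) L) f = of_real r * crd k (lsum T_zero T_add (T_mult mult) L) g"
    using fr cr by simp
  ultimately have "cmod (of_real r * u (bf mult k g) - crd k (lsum T_zero T_add (T_mult mult) L) f) \<le> r * eps"
    using r by (simp add: right_diff_distrib[symmetric] norm_mult)
  then show ?thesis by (simp add: sc_val_def g_def)
qed

lemma indep:
  fixes f :: "'s \<Rightarrow> complex"
  assumes u: "u \<in> proj_tensor T_carrier T_add T_scale T_norm"
    and f: "f \<in> linf" and r: "r > 0" "linf_norm f \<le> r" and r': "r' > 0" "linf_norm f \<le> r'"
  shows "sc_val mult u k r f = sc_val mult u k r' f"
proof (rule eq_eps[where M = "r + r'"])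
  fix e :: real assume e: "e > 0"
  obtain L where L: "set L \<subseteq> T_carrier \<times> T_carrier" "tclose T_carrier T_add T_scale T_norm u L e"
    using PT_approx[OF u e] by auto
  let ?c = "crd k (lsum T_zero T_add (T_mult mult) L) f"
  have "cmod (sc_val mult u k r f - sc_val mult u k r' f)
      \<le> cmod (sc_val mult u k r f - ?c) + cmod (sc_val mult u k r' f - ?c)"
    using norm_triangle_ineq4[of "sc_val mult u k r f - ?c" "sc_val mult u k r' f - ?c"] by simp
  also have "\<dots> \<le> r * e + r' * e"
    using KL[OF L(2) L(1) f r] KL[OF L(2) L(1) f r'] by (intro add_mono) auto
  finally show "cmod (sc_val mult u k r f - sc_val mult u k r' f) \<le> (r + r') * e"
    by (simp add: distrib_right)
qed

definition Xk :: "('s \<Rightarrow> 's \<Rightarrow> 's) \<Rightarrow> 's tri tens \<Rightarrow> nat \<Rightarrow> 's bid" where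
  "Xk mult u k = (\<lambda>f. if f \<in> linf then sc_val mult u k (linf_norm f + 1) f else 0)"

lemma AP:
  fixes f :: "'s \<Rightarrow> complex"
  assumes u: "u \<in> proj_tensor T_carrier T_add T_scale T_norm"
    and tc: "tclose T_carrier T_add T_scale T_norm u L eps" and L: "set L \<subseteq> T_carrier \<times> T_carrier"
    and f: "f \<in> linf" and r: "r > 0" "linf_norm f \<le> r"
  shows "cmod (Xk mult u k f - crd k (lsum T_zero T_add (T_mult mult) L) f) \<le> r * eps"
proof -
  have "Xk mult u k f = sc_val mult u k r f"
    using f indep[OF u f _ _ r, of "linf_norm f + 1"] linf_nonneg[OF f] by (simp add: Xk_def)
  then show ?thesis using KL[OF tc L f r] by simp
qed

lemma Xk_in:
  assumes u: "u \<in> proj_tensor T_carrier T_add T_scale T_norm"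
  shows "Xk mult u k \<in> bidual"
proof -
  let ?X = "Xk mult u k"
  note nn = linf_nonneg
  have add: "?X (\<lambda>s. f s + g s) = ?X f + ?X g" if f: "f \<in> linf" and g: "g \<in> linf" for f g
  proof -
    have fg: "(\<lambda>s. f s + g s) \<in> linf" using linf_add[OF f g] .
    let ?rh = "linf_norm (\<lambda>s. f s + g s) + 1" and ?rf = "linf_norm f + 1" and ?rg = "linf_norm g + 1"
    have "?X (\<lambda>s. f s + g s) - (?X f + ?X g) = 0"
    proof (rule eq_eps[where M = "?rh + ?rf + ?rg"])
      fix e :: real assume e: "e > 0"
      obtain L where L: "set L \<subseteq> T_carrier \<times> T_carrier" "tclose T_carrier T_add T_scale T_norm u L e"
        using PT_approx[OF u e] by auto
      define c where "c = crd k (lsum T_zero T_add (T_mult mult) L)"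
      have cb: "c \<in> bidual" unfolding c_def using crd_in[OF lsum_in[OF L(1)]] .
      have 1: "cmod (?X (\<lambda>s. f s + g s) - c (\<lambda>s. f s + g s)) \<le> ?rh * e"
        unfolding c_def by (rule AP[OF u L(2) L(1) fg]) (use nn[OF fg] in auto)
      have 2: "cmod (?X f - c f) \<le> ?rf * e"
        unfolding c_def by (rule AP[OF u L(2) L(1) f]) (use nn[OF f] in auto)
      have 3: "cmod (?X g - c g) \<le> ?rg * e"
        unfolding c_def by (rule AP[OF u L(2) L(1) g]) (use nn[OF g] in auto)
      have ca: "c (\<lambda>s. f s + g s) = c f + c g" using bidD(1)[OF cb f g] .
      have "?X (\<lambda>s. f s + g s) - (?X f + ?X g) - 0 =
            (?X (\<lambda>s. f s + g s) - c (\<lambda>s. f s + g s)) - (?X f - c f) - (?X g - c g)"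
        using ca by simp
      then have "cmod (?X (\<lambda>s. f s + g s) - (?X f + ?X g) - 0) \<le>
          cmod (?X (\<lambda>s. f s + g s) - c (\<lambda>s. f s + g s)) + cmod (?X f - c f) + cmod (?X g - c g)"
        by (simp only: tri3)
      also have "\<dots> \<le> ?rh * e + ?rf * e + ?rg * e" using 1 2 3 by linarith
      finally show "cmod (?X (\<lambda>s. f s + g s) - (?X f + ?X g) - 0) \<le> (?rh + ?rf + ?rg) * e"
        by (simp add: distrib_right)
    qed
    then show ?thesis by simp
  qed
  have scl: "?X (\<lambda>s. c * f s) = c * ?X f" if f: "f \<in> linf" for c f
  proof -
    have cf: "(\<lambda>s. c * f s) \<in> linf" using linf_scale[OF f] .
    let ?r1 = "linf_norm (\<lambda>s. c * f s) + 1" and ?r2 = "linf_norm f + 1"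
    show ?thesis
    proof (rule eq_eps[where M = "?r1 + cmod c * ?r2"])
      fix e :: real assume e: "e > 0"
      obtain L where L: "set L \<subseteq> T_carrier \<times> T_carrier" "tclose T_carrier T_add T_scale T_norm u L e"
        using PT_approx[OF u e] by auto
      define d where "d = crd k (lsum T_zero T_add (T_mult mult) L)"
      have db: "d \<in> bidual" unfolding d_def using crd_in[OF lsum_in[OF L(1)]] .
      have 1: "cmod (?X (\<lambda>s. c * f s) - d (\<lambda>s. c * f s)) \<le> ?r1 * e"
        unfolding d_def by (rule AP[OF u L(2) L(1) cf]) (use nn[OF cf] in auto)
      have 2: "cmod (?X f - d f) \<le> ?r2 * e"
        unfolding d_def by (rule AP[OF u L(2) L(1) f]) (use nn[OF f] in auto)
      have ds: "d (\<lambda>s. c * f s) = c * d f" using bidD(2)[OF db f] .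
      have "?X (\<lambda>s. c * f s) - c * ?X f = (?X (\<lambda>s. c * f s) - d (\<lambda>s. c * f s)) - c * (?X f - d f)"
        using ds by (simp add: algebra_simps)
      then have "cmod (?X (\<lambda>s. c * f s) - c * ?X f) \<le> cmod (?X (\<lambda>s. c * f s) - d (\<lambda>s. c * f s)) + cmod c * cmod (?X f - d f)"
        by (simp only: tri2m)
      also have "\<dots> \<le> ?r1 * e + cmod c * (?r2 * e)" using 1 2 by (intro add_mono mult_left_mono) auto
      finally show "cmod (?X (\<lambda>s. c * f s) - c * ?X f) \<le> (?r1 + cmod c * ?r2) * e"
        by (simp add: algebra_simps)
    qed
  qed
  obtain L where L: "set L \<subseteq> T_carrier \<times> T_carrier" "tclose T_carrier T_add T_scale T_norm u L 1"
    using PT_approx[OF u, of 1] by auto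
  define d where "d = crd k (lsum T_zero T_add (T_mult mult) L)"
  have db: "d \<in> bidual" unfolding d_def using crd_in[OF lsum_in[OF L(1)]] .
  have bnd: "cmod (?X f) \<le> (bid_norm d + 1) * linf_norm f" if f: "f \<in> linf" for f
  proof (cases "linf_norm f \<le> 0")
    case True
    then have "f = (\<lambda>s. 0)" using linf_norm_zero f by blast
    then have "f = (\<lambda>s. 0 * f s)" by simp
    then have "?X f = 0" using scl[OF f, of 0] by simp
    then show ?thesis using nn[OF f] bid_nonneg[OF db] by simp
  next
    case False
    have 1: "cmod (?X f - d f) \<le> linf_norm f * 1"
      unfolding d_def by (rule AP[OF u L(2) L(1) f]) (use False in auto)
    have "cmod (?X f) \<le> cmod (?X f - d f) + cmod (d f)" using norm_triangle_ineq[of "?X f - d f" "d f"] by simp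
    also have "\<dots> \<le> linf_norm f + bid_norm d * linf_norm f" using 1 bid_bound[OF db f] by simp
    finally show ?thesis by (simp add: algebra_simps)
  qed
  have off: "\<forall>f. f \<notin> linf \<longrightarrow> ?X f = 0" by (simp add: Xk_def)
  show ?thesis unfolding bidual_def
    apply (rule CollectI)
    apply (intro conjI)
    using add apply blast
    using scl apply blast
    using bnd apply blast
    using off apply blast
    done
qed



definition KK :: "nat \<Rightarrow> nat" where "KK k = (if k = 0 then 0 else if k = 1 then 1 else 2)"

lemma crd_KK: "crd (KK k) v = crd k v"
  by (simp add: KK_def crd_def)

definition piX :: "('s \<Rightarrow> 's \<Rightarrow> 's) \<Rightarrow> 's tri tens \<Rightarrow> 's tri" where
  "piX mult u = (Xk mult u 0, Xk mult u 1, Xk mult u 2)"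

lemma crd_piX: "crd k (piX mult u) = Xk mult u (KK k)"
  by (simp add: KK_def crd_def piX_def)

lemma piX_in: "u \<in> proj_tensor T_carrier T_add T_scale T_norm \<Longrightarrow> piX mult u \<in> T_carrier"
  by (simp add: piX_def T_in Xk_in)

lemma tclose_mono: "tclose C p sc nm u L e \<Longrightarrow> e \<le> e' \<Longrightarrow> tclose C p sc nm u L e'"
  unfolding tclose_def by (meson order_trans)

lemma AP_KK:
  fixes f :: "'s \<Rightarrow> complex"
  assumes u: "u \<in> proj_tensor T_carrier T_add T_scale T_norm"
    and tc: "tclose T_carrier T_add T_scale T_norm u L eps" and L: "set L \<subseteq> T_carrier \<times> T_carrier"
    and f: "f \<in> linf" and r: "r > 0" "linf_norm f \<le> r"
  shows "cmod (crd k (piX mult u) f - crd k (lsum T_zero T_add (T_mult mult) L) f) \<le> r * eps"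
  using AP[OF u tc L f r, of mult "KK k"] by (simp add: crd_piX crd_KK)

lemma pi_rel_ex:
  fixes mult :: "'s \<Rightarrow> 's \<Rightarrow> 's"
  assumes u: "u \<in> proj_tensor T_carrier T_add T_scale T_norm"
  shows "pi_rel T_carrier T_zero T_add T_scale (T_mult mult) T_norm u (piX mult u)"
  unfolding pi_rel_def
proof (intro conjI allI impI)
  show "piX mult u \<in> T_carrier" using piX_in[OF u] .
  fix eps :: real assume eps: "eps > 0"
  obtain L where L: "set L \<subseteq> T_carrier \<times> T_carrier" "tclose T_carrier T_add T_scale T_norm u L (eps/6)"
    using PT_approx[OF u, of "eps/6"] eps by auto
  define D where "D = T_add (piX mult u) (T_scale (-1) (lsum T_zero T_add (T_mult mult) L))"
  have cD: "bid_norm (crd k D) \<le> eps / 3" for k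
  proof (rule bid_least)
    fix f :: "'s \<Rightarrow> complex" assume f: "f \<in> linf" "linf_norm f \<le> 1"
    have "cmod (crd k D f) = cmod (crd k (piX mult u) f - crd k (lsum T_zero T_add (T_mult mult) L) f)"
      by (simp add: D_def crd_diff)
    also have "\<dots> \<le> 2 * (eps / 6)"
      by (rule AP_KK[OF u L(2) L(1) f(1)]) (use f in auto)
    finally show "cmod (crd k D f) \<le> eps / 3" by simp
  qed
  have "T_norm D \<le> eps" unfolding T_norm_crd using cD[of 0] cD[of 1] cD[of 2] by linarith
  moreover have "tclose T_carrier T_add T_scale T_norm u L eps"
    using tclose_mono[OF L(2)] eps by simp
  ultimately show "\<exists>L. set L \<subseteq> T_carrier \<times> T_carrier \<and> tclose T_carrier T_add T_scale T_norm u L eps \<and>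
          T_norm (T_add (piX mult u) (T_scale (- 1) (lsum T_zero T_add (T_mult mult) L))) \<le> eps"
    using L(1) unfolding D_def by blast
qed

lemma pi_rel_uniq:
  fixes mult :: "'s \<Rightarrow> 's \<Rightarrow> 's"
  assumes u: "u \<in> proj_tensor T_carrier T_add T_scale T_norm"
    and x: "pi_rel T_carrier T_zero T_add T_scale (T_mult mult) T_norm u x"
  shows "x = piX mult u"
proof (rule crd_eq_T, rule ext)
  fix k and f :: "'s \<Rightarrow> complex"
  have xC: "x \<in> T_carrier" using x by (simp add: pi_rel_def)
  show "crd k x f = crd k (piX mult u) f"
  proof (cases "f \<in> linf")
    case False
    then show ?thesis using bidD(4)[OF crd_in[OF xC]] bidD(4)[OF crd_in[OF piX_in[OF u]]] by simp
  next
    case f: True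
    show ?thesis
    proof (rule eq_eps[where M = "linf_norm f + (linf_norm f + 1)"])
      fix e :: real assume e: "e > 0"
      obtain L where L: "set L \<subseteq> T_carrier \<times> T_carrier" "tclose T_carrier T_add T_scale T_norm u L e"
        "T_norm (T_add x (T_scale (-1) (lsum T_zero T_add (T_mult mult) L))) \<le> e"
        using x e unfolding pi_rel_def by blast
      define c where "c = crd k (lsum T_zero T_add (T_mult mult) L) f"
      define D where "D = T_add x (T_scale (-1) (lsum T_zero T_add (T_mult mult) L))"
      have DC: "D \<in> T_carrier" unfolding D_def
        by (intro T_add_in T_scale_in xC lsum_in L(1))
      have "cmod (crd k x f - c) = cmod (crd k D f)" by (simp add: D_def c_def crd_diff)
      also have "\<dots> \<le> T_norm D * linf_norm f" by (rule crd_bound_T[OF DC f])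
      also have "\<dots> \<le> e * linf_norm f" using L(3) linf_nonneg[OF f] unfolding D_def
        by (intro mult_right_mono) auto
      finally have 1: "cmod (crd k x f - c) \<le> linf_norm f * e" by (simp add: mult.commute)
      have 2: "cmod (crd k (piX mult u) f - c) \<le> (linf_norm f + 1) * e"
        unfolding c_def by (rule AP_KK[OF u L(2) L(1) f]) (use linf_nonneg[OF f] in auto)
      have "cmod (crd k x f - crd k (piX mult u) f) \<le> cmod (crd k x f - c) + cmod (crd k (piX mult u) f - c)"
        using norm_triangle_ineq4[of "crd k x f - c" "crd k (piX mult u) f - c"] by simp
      also have "\<dots> \<le> (linf_norm f + (linf_norm f + 1)) * e" using 1 2 by (simp add: distrib_right)
      finally show "cmod (crd k x f - crd k (piX mult u) f) \<le> (linf_norm f + (linf_norm f + 1)) * e" .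
    qed
  qed
qed

lemma pi_B_eq:
  fixes mult :: "'s \<Rightarrow> 's \<Rightarrow> 's"
  assumes u: "u \<in> proj_tensor T_carrier T_add T_scale T_norm"
  shows "pi_B T_carrier T_zero T_add T_scale (T_mult mult) T_norm u = piX mult u"
  unfolding pi_B_def
  by (rule the_equality) (rule pi_rel_ex[OF u], erule pi_rel_uniq[OF u])

lemma piX_formula:
  fixes mult :: "'s \<Rightarrow> 's \<Rightarrow> 's"
  assumes u: "u \<in> proj_tensor T_carrier T_add T_scale T_norm"
  shows "crd 2 (piX mult u) (\<lambda>s. 1) = u (bf mult 2 (\<lambda>s. 1))"
proof -
  have "crd 2 (piX mult u) (\<lambda>s. 1) = sc_val mult u 2 (linf_norm (\<lambda>s::'s. 1::complex) + 1) (\<lambda>s. 1)"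
    by (simp add: crd_piX KK_def Xk_def linf_const)
  also have "\<dots> = sc_val mult u 2 1 (\<lambda>s. 1)"
  proof (rule indep[OF u linf_const])
    have "0 \<le> linf_norm (\<lambda>s::'s. 1::complex)" by (rule linf_nonneg[OF linf_const])
    moreover have "linf_norm (\<lambda>s::'s. 1::complex) \<le> 1" by (rule linf_norm_const1)
    ultimately show "0 < linf_norm (\<lambda>s::'s. 1::complex) + 1" "linf_norm (\<lambda>s::'s. 1::complex) \<le> linf_norm (\<lambda>s::'s. 1::complex) + 1"
      "(0::real) < 1" "linf_norm (\<lambda>s::'s. 1::complex) \<le> 1" by auto
  qed
  finally show ?thesis by (simp add: sc_val_def)
qed



definition psi :: "'s bid \<Rightarrow> complex" where "psi m = m (\<lambda>s. 1)"

definition pf :: "nat \<Rightarrow> nat \<Rightarrow> 's tri \<Rightarrow> 's tri \<Rightarrow> complex" where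
  "pf i j = (\<lambda>x y. if x \<in> T_carrier \<and> y \<in> T_carrier then psi (crd i x) * psi (crd j y) else 0)"

lemma psi_bound: "x \<in> T_carrier \<Longrightarrow> cmod (psi (crd i x)) \<le> T_norm x"
proof -
  assume x: "x \<in> T_carrier"
  have "cmod (psi (crd i x)) \<le> bid_norm (crd i x)"
    unfolding psi_def by (rule bid_ge[OF crd_in[OF x] linf_const linf_norm_const1])
  also have "\<dots> \<le> T_norm x" by (rule T_norm_ge[OF x])
  finally show ?thesis .
qed

lemma pf_bil: "bil T_carrier T_add T_scale T_norm (pf i j :: 's tri \<Rightarrow> 's tri \<Rightarrow> complex)"
proof -
  have b: "cmod (pf i j x y) \<le> 1 * T_norm x * T_norm y" if "x \<in> T_carrier" "y \<in> T_carrier" for x y :: "'s tri"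
    using psi_bound[OF that(1), of i] psi_bound[OF that(2), of j] that
    by (simp add: pf_def norm_mult) (rule mult_mono, auto simp: T_norm_nonneg)
  show ?thesis unfolding bil_def
    apply (intro conjI)
    subgoal by (auto simp: pf_def T_add_in crd_add psi_def bid_add_def algebra_simps)
    subgoal by (auto simp: pf_def T_scale_in crd_scale psi_def bid_scale_def algebra_simps)
    subgoal using b by blast
    subgoal by (auto simp: pf_def)
    done
qed

lemma bf22: fixes mult :: "'s \<Rightarrow> 's \<Rightarrow> 's" shows "bf mult 2 (\<lambda>s. 1) = pf 2 2"
proof (intro ext)
  fix x y :: "'s tri"
  show "bf mult 2 (\<lambda>s. 1) x y = pf 2 2 x y"
  proof (cases "x \<in> T_carrier \<and> y \<in> T_carrier")
    case True
    then have x3: "snd (snd x) \<in> bidual" and y3: "snd (snd y) \<in> bidual" by (auto simp: T_in)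
    have "arens mult (snd (snd x)) (snd (snd y)) (\<lambda>s. 1) = snd (snd x) (\<lambda>s. snd (snd y) (\<lambda>t. 1))"
      by (simp add: arens_def linf_const)
    also have "(\<lambda>s. snd (snd y) (\<lambda>t. 1)) = (\<lambda>s. snd (snd y) (\<lambda>t. 1) * (\<lambda>s. 1) s)" by simp
    also have "snd (snd x) \<dots> = snd (snd y) (\<lambda>t. 1) * snd (snd x) (\<lambda>s. 1)"
      by (rule bidD(2)[OF x3 linf_const])
    finally show ?thesis using True by (simp add: bf_def pf_def crd_def T_mult_def psi_def)
  qed (auto simp: bf_def pf_def)
qed

lemma tsum_zero: "tsum L (\<lambda>x y. 0) = 0"
  by (induction L) (auto simp: tsum_def)

lemma PT_zero:
  assumes u: "u \<in> proj_tensor T_carrier T_add T_scale T_norm"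
  shows "u (\<lambda>x y. 0) = 0"
proof (rule eq_eps[where M = 1])
  fix e :: real assume e: "e > 0"
  obtain L where L: "set L \<subseteq> T_carrier \<times> T_carrier" "tclose T_carrier T_add T_scale T_norm u L e"
    using PT_approx[OF u e] by auto
  have bil0: "bil T_carrier T_add T_scale T_norm (\<lambda>x y. 0)" unfolding bil_def
    by (auto intro: exI[of _ 0])
  have "bil_norm T_carrier T_norm (\<lambda>x y. 0::complex) \<le> 1" by (rule bil_norm_le) simp
  then show "cmod (u (\<lambda>x y. 0) - 0) \<le> 1 * e"
    using L(2) bil0 unfolding tclose_def by (auto simp: tsum_zero)
qed

lemma idem_exists:
  assumes "clifford_semigroup mult"
  shows "\<exists>e. mult e e = e"
proof -
  have inv: "inverse_semigroup mult" using assms by (simp add: clifford_semigroup_def)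
  then have assoc: "\<And>a b c. mult (mult a b) c = mult a (mult b c)" by (simp add: inverse_semigroup_def)
  obtain s :: 'a where True by simp
  obtain t where t: "mult (mult s t) s = s" using inv unfolding inverse_semigroup_def by blast
  have "mult (mult s t) (mult s t) = mult (mult (mult s t) s) t" by (simp add: assoc)
  then show ?thesis using t by auto
qed

theorem mainTheorem11:
  fixes mult :: "'s \<Rightarrow> 's \<Rightarrow> 's"
  assumes "clifford_semigroup mult"
    and "uniformly_locally_finite mult"
  shows "\<not> approx_biprojective TYPE('i) T_carrier T_zero T_add T_scale (T_mult mult) T_norm"
proof
  assume ab: "approx_biprojective TYPE('i) T_carrier T_zero T_add T_scale (T_mult mult) T_norm"
  obtain e where e: "mult e e = e" using idem_exists[OF assms(1)] by blast
  define E :: "'s bid" where "E = (\<lambda>f. if f \<in> linf then f e else 0)"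
  define Z :: "'s bid" where "Z = (\<lambda>f. 0)"
  have EB: "E \<in> bidual"
  proof -
    have "\<forall>f\<in>linf. cmod (E f) \<le> 1 * linf_norm f" by (simp add: E_def linf_le)
    then have "\<exists>K. \<forall>f\<in>linf. cmod (E f) \<le> K * linf_norm f" by blast
    then show ?thesis unfolding bidual_def by (auto simp: E_def linf_add linf_scale)
  qed
  have ZB: "Z \<in> bidual" unfolding Z_def by (rule zero_bid)
  have EE: "arens mult E E = E"
  proof (rule ext)
    fix f show "arens mult E E f = E f"
    proof (cases "f \<in> linf")
      case True
      have "(\<lambda>s. E (\<lambda>t. f (mult s t))) = (\<lambda>s. f (mult s e))" using True by (simp add: E_def linf_shift)
      moreover have "(\<lambda>s. f (mult s e)) \<in> linf" using True unfolding linf_def by auto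
      ultimately show ?thesis using True e by (simp add: arens_def E_def linf_shift)
    qed (simp add: arens_def E_def)
  qed
  have ZL: "arens mult Z n = Z" for n unfolding Z_def by (rule arens_zero_left)
  have ZR: "arens mult E Z = Z" unfolding Z_def by (rule arens_zero_right[OF EB[unfolded]])
  have addZE: "bid_add Z E = E" "bid_add E Z = E" by (auto simp: bid_add_def Z_def)
  define P where "P = (E, Z, Z)"
  define Q where "Q = (Z, Z, E)"
  define X where "X = (Z, E, Z)"
  have PC: "P \<in> T_carrier" and QC: "Q \<in> T_carrier" and XC: "X \<in> T_carrier"
    by (auto simp: P_def Q_def X_def T_in EB ZB)
  have XQ: "T_mult mult X Q = X" by (simp add: T_mult_def X_def Q_def ZL EE addZE)
  have PX: "T_mult mult P X = X" by (simp add: T_mult_def X_def P_def ZL ZR EE addZE)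
  obtain I :: "'i set" and le :: "'i \<Rightarrow> 'i \<Rightarrow> bool" and \<rho> :: "'i \<Rightarrow> 's tri \<Rightarrow> 's tri tens" where I: "\<forall>i\<in>I. bimod_morph T_carrier T_add T_scale (T_mult mult) T_norm (\<rho> i)"
    and conv: "\<forall>b\<in>T_carrier. \<forall>eps>0. \<exists>i0\<in>I. \<forall>i\<in>I. le i0 i \<longrightarrow>
            T_norm (T_add (pi_B T_carrier T_zero T_add T_scale (T_mult mult) T_norm (\<rho> i b)) (T_scale (-1) b)) < eps"
    and refl: "\<forall>i\<in>I. le i i"
    using ab unfolding approx_biprojective_def
    apply -
    apply (elim exE conjE)
    apply (rule that)
      apply assumption+
    done
  have "\<exists>i0\<in>I. \<forall>i\<in>I. le i0 i \<longrightarrow>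
            T_norm (T_add (pi_B T_carrier T_zero T_add T_scale (T_mult mult) T_norm (\<rho> i Q)) (T_scale (-1) Q)) < 1"
    using conv QC by simp
  then obtain i where iI: "i \<in> I" and
    ci: "T_norm (T_add (pi_B T_carrier T_zero T_add T_scale (T_mult mult) T_norm (\<rho> i Q)) (T_scale (-1) Q)) < 1"
    using refl by blast
  have bm: "bimod_morph T_carrier T_add T_scale (T_mult mult) T_norm (\<rho> i)" using I iI by blast
  have uPT: "\<rho> i Q \<in> proj_tensor T_carrier T_add T_scale T_norm" using bm QC unfolding bimod_morph_def by blast
  have PPT: "\<rho> i P \<in> proj_tensor T_carrier T_add T_scale T_norm" using bm PC unfolding bimod_morph_def by blast
  have mods: "\<forall>a\<in>T_carrier. \<forall>b\<in>T_carrier. \<rho> i (T_mult mult a b) = lmod T_carrier T_add T_scale (T_mult mult) T_norm a (\<rho> i b) \<and>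
                   \<rho> i (T_mult mult b a) = rmod T_carrier T_add T_scale (T_mult mult) T_norm (\<rho> i b) a"
    using bm unfolding bimod_morph_def by blast
  have "\<rho> i (T_mult mult X Q) = lmod T_carrier T_add T_scale (T_mult mult) T_norm X (\<rho> i Q)"
    using mods XC QC by blast
  then have L: "\<rho> i X = lmod T_carrier T_add T_scale (T_mult mult) T_norm X (\<rho> i Q)"
    by (simp only: XQ)
  have "\<rho> i (T_mult mult P X) = rmod T_carrier T_add T_scale (T_mult mult) T_norm (\<rho> i P) X"
    using mods XC PC by blast
  then have R: "\<rho> i X = rmod T_carrier T_add T_scale (T_mult mult) T_norm (\<rho> i P) X"
    by (simp only: PX)
  have f1: "(\<lambda>x y. if x \<in> T_carrier \<and> y \<in> T_carrier then pf 1 2 (T_mult mult X x) y else 0) = pf 2 2"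
  proof (intro ext)
    fix x y :: "'s tri"
    show "(if x \<in> T_carrier \<and> y \<in> T_carrier then pf 1 2 (T_mult mult X x) y else 0) = pf 2 2 x y"
    proof (cases "x \<in> T_carrier \<and> y \<in> T_carrier")
      case True
      then have x3: "snd (snd x) \<in> bidual" by (auto simp: T_in)
      have "(\<lambda>s. snd (snd x) (\<lambda>t. 1)) \<in> linf" by (rule linf_const)
      then have "psi (crd 1 (T_mult mult X x)) = psi (crd 2 x)"
        by (simp add: psi_def crd_def T_mult_def X_def ZL bid_add_def Z_def arens_def E_def linf_const)
      then show ?thesis using True T_mult_in[OF XC, of x mult] by (simp add: pf_def)
    next
      case False
      then show ?thesis unfolding pf_def by auto
    qed
  qed
  have f2: "(\<lambda>x y. if x \<in> T_carrier \<and> y \<in> T_carrier then pf 1 2 x (T_mult mult y X) else 0) = (\<lambda>x y. 0)"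
  proof (intro ext)
    fix x y :: "'s tri"
    show "(if x \<in> T_carrier \<and> y \<in> T_carrier then pf 1 2 x (T_mult mult y X) else 0) = 0"
    proof (cases "x \<in> T_carrier \<and> y \<in> T_carrier")
      case True
      then have y3: "snd (snd y) \<in> bidual" by (auto simp: T_in)
      have "crd 2 (T_mult mult y X) = Z"
        using arens_zero_right[OF y3, of mult] by (simp add: crd_def T_mult_def X_def Z_def)
      then show ?thesis using True T_mult_in[OF True[THEN conjunct2] XC, of mult]
        by (simp add: pf_def psi_def Z_def)
    next
      case False
      then show ?thesis by auto
    qed
  qed
  have "\<rho> i X (pf 1 2) = \<rho> i Q (\<lambda>x y. if x \<in> T_carrier \<and> y \<in> T_carrier then pf 1 2 (T_mult mult X x) y else 0)"
    by (simp only: L lmod_def if_P[OF pf_bil])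
  also have "\<dots> = \<rho> i Q (pf 2 2)" by (simp only: f1)
  finally have "\<rho> i X (pf 1 2) = \<rho> i Q (pf 2 2)" .
  moreover have "\<rho> i X (pf 1 2) = \<rho> i P (\<lambda>x y. if x \<in> T_carrier \<and> y \<in> T_carrier then pf 1 2 x (T_mult mult y X) else 0)"
    by (simp only: R rmod_def if_P[OF pf_bil])
  then have "\<rho> i X (pf 1 2) = 0" by (simp only: f2 PT_zero[OF PPT])
  ultimately have u0: "\<rho> i Q (pf 2 2) = 0" by simp
  have piB: "pi_B T_carrier T_zero T_add T_scale (T_mult mult) T_norm (\<rho> i Q) = piX mult (\<rho> i Q)"
    by (rule pi_B_eq[OF uPT])
  have c0: "crd 2 (piX mult (\<rho> i Q)) (\<lambda>s. 1) = 0"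
    using piX_formula[OF uPT, of mult] u0 bf22[of mult] by simp
  define D where "D = T_add (piX mult (\<rho> i Q)) (T_scale (-1) Q)"
  have DC: "D \<in> T_carrier" unfolding D_def by (intro T_add_in T_scale_in piX_in[OF uPT] QC)
  have dd: "crd 2 D (\<lambda>s. 1) = crd 2 (piX mult (\<rho> i Q)) (\<lambda>s. 1) + (-1) * crd 2 Q (\<lambda>s. 1)"
    by (simp only: D_def crd_diff)
  have q1: "crd 2 Q (\<lambda>s. 1) = 1" by (simp add: Q_def crd_def E_def linf_const)
  have "crd 2 D (\<lambda>s. 1) = - 1" using dd q1 c0 by simp
  then have "1 \<le> bid_norm (crd 2 D)"
    using bid_ge[OF crd_in[OF DC] linf_const linf_norm_const1, of 2] by simp
  also have "\<dots> \<le> T_norm D" by (rule T_norm_ge[OF DC])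
  finally show False using ci piB unfolding D_def by simp
qed

end
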